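(* Let $G$ be a graph with $n$ vertices, $m$ edges, and maximum degree at most $\Delta$, where $\Delta$ is a positive integer. If $d\in\{0,1,\ldots,\Delta-1\}$ is such that $$\frac{2m}{n}\in\left[\frac{2\Delta d}{\Delta+d},\ \frac{2\Delta(d+1)}{\Delta+d+1}\right],$$ then $$irr(G)\leq d(d+1)n+\frac{1}{\Delta}\left(\Delta^2-(2d+1)\Delta-d^2-d\right)m.$$
   Context: All graphs are finite, simple and undirected. For a graph $G$ with edge set $E(G)$ and vertex degrees $d_G(u)$, the irregularity (in the sense of Albertson) is $irr(G)=\sum_{uv\in E(G)}|d_G(u)-d_G(v)|$. *)

theory Defs
  imports Complex_Main
begin

definition simple_graph :: "'a set \<Rightarrow> 'a set set \<Rightarrow> bool" where
  "simple_graph V E \<longleftrightarrow> finite V \<and> (\<forall>e\<in>E. e \<subseteq> V \<and> card e = 2)"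

definition degree :: "'a set set \<Rightarrow> 'a \<Rightarrow> nat" where
  "degree E v = card {e \<in> E. v \<in> e}"

definition irr :: "'a set set \<Rightarrow> int" where
  "irr E = (\<Sum>e\<in>E. \<bar>int (degree E (SOME u. u \<in> e)) - int (degree E (SOME v. v \<in> e - {SOME u. u \<in> e}))\<bar>)"

end

theory Submission
  imports Defs
begin

lemma h1:
  fixes a d :: nat assumes "1 \<le> a"
  shows "2 * real d + 1 \<le> real a + real d * (real d + 1) / real a"
proof -
  have "(real a - d) * (real a - d - 1) \<ge> 0"
  proof (cases "a \<le> d")
    case True
    then have "real a - d \<le> 0" "real a - d - 1 \<le> 0" by auto
    then show ?thesis by (simp add: mult_nonpos_nonpos)
  next
    case False
    then have "real a - d \<ge> 0" "real a - d - 1 \<ge> 0" by auto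
    then show ?thesis by simp
  qed
  then have "(2 * real d + 1) * real a \<le> real a * real a + real d * (real d + 1)"
    by (simp add: algebra_simps)
  moreover have "real a > 0" using assms by simp
  ultimately show ?thesis by (simp add: field_simps)
qed

lemma h2:
  fixes b \<Delta> d :: nat assumes "1 \<le> b" "b \<le> \<Delta>"
  shows "real b - real d * (real d + 1) / real b \<le> real \<Delta> - real d * (real d + 1) / real \<Delta>"
proof -
  have "real d * (real d + 1) / real \<Delta> \<le> real d * (real d + 1) / real b"
    using assms by (intro divide_left_mono) auto
  then show ?thesis using assms by simp
qed

lemma key:
  fixes a b \<Delta> d :: nat assumes "1 \<le> a" "a \<le> \<Delta>" "1 \<le> b" "b \<le> \<Delta>"
  shows "\<bar>real a - real b\<bar> \<le> real d * (real d + 1) / real a + real d * (real d + 1) / real b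
     + (1 / real \<Delta>) * ((real \<Delta>)^2 - (2 * real d + 1) * real \<Delta> - (real d)^2 - real d)"
proof -
  have c: "(1 / real \<Delta>) * ((real \<Delta>)^2 - (2 * real d + 1) * real \<Delta> - (real d)^2 - real d)
     = real \<Delta> - (2 * real d + 1) - real d * (real d + 1) / real \<Delta>"
    using assms by (simp add: field_simps power2_eq_square)
  have "real d * (real d + 1) / real a \<ge> 0" "real d * (real d + 1) / real b \<ge> 0" by auto
  show ?thesis
  proof (cases "a \<le> b")
    case True
    then show ?thesis unfolding c using h1[OF assms(1), of d] h2[OF assms(3,4), of d] by simp
  next
    case False
    then show ?thesis unfolding c using h1[OF assms(3), of d] h2[OF assms(1,2), of d] by simp
  qed
qed

theorem theorem1:
  fixes V :: "'a set" and E :: "'a set set" and \<Delta> d :: nat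
  assumes "simple_graph V E"
    and "\<Delta> > 0"
    and "\<forall>v\<in>V. degree E v \<le> \<Delta>"
    and "d < \<Delta>"
    and "2 * real \<Delta> * real d / (real \<Delta> + real d) \<le> 2 * real (card E) / real (card V)"
    and "2 * real (card E) / real (card V) \<le> 2 * real \<Delta> * (real d + 1) / (real \<Delta> + real d + 1)"
  shows "real_of_int (irr E) \<le> real d * (real d + 1) * real (card V)
           + (1 / real \<Delta>) * ((real \<Delta>)^2 - (2 * real d + 1) * real \<Delta> - (real d)^2 - real d) * real (card E)"
proof -
  define D where "D = real d * (real d + 1)"
  define c where "c = (1 / real \<Delta>) * ((real \<Delta>)^2 - (2 * real d + 1) * real \<Delta> - (real d)^2 - real d)"
  define f where "f x = D / real (degree E x)" for x
  have fV: "finite V" and eV: "\<And>e. e \<in> E \<Longrightarrow> e \<subseteq> V \<and> card e = 2"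
    using assms(1) unfolding simple_graph_def by auto
  have fE: "finite E" using eV fV by (meson Pow_iff finite_Pow_iff finite_subset subsetI)
  have degpos: "1 \<le> degree E x" if "x \<in> e" "e \<in> E" for x e
  proof -
    have "e \<in> {e \<in> E. x \<in> e}" using that by auto
    moreover have "finite {e \<in> E. x \<in> e}" using fE by auto
    ultimately show ?thesis unfolding degree_def
      by (metis One_nat_def Suc_leI card_gt_0_iff empty_iff)
  qed
  have degle: "degree E x \<le> \<Delta>" if "x \<in> e" "e \<in> E" for x e
    using assms(3) eV that by auto
  have edge: "real_of_int \<bar>int (degree E (SOME u. u \<in> e)) - int (degree E (SOME v. v \<in> e - {SOME u. u \<in> e}))\<bar>
      \<le> (\<Sum>x\<in>e. f x) + c" if "e \<in> E" for e
  proof -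
    define s where "s = (SOME u. u \<in> e)"
    define t where "t = (SOME v. v \<in> e - {s})"
    have ce: "card e = 2" using eV that by auto
    then obtain u w where uw: "e = {u, w}" "u \<noteq> w" by (meson card_2_iff)
    have s: "s \<in> e" unfolding s_def using uw by (metis insertI1 someI_ex)
    have "e - {s} \<noteq> {}" using uw s by auto
    then have t: "t \<in> e - {s}" unfolding t_def by (metis ex_in_conv someI_ex)
    have est: "e = {s, t}" using uw s t by auto
    have st: "s \<noteq> t" using t by auto
    have "\<bar>real (degree E s) - real (degree E t)\<bar> \<le> f s + f t + c"
      unfolding f_def c_def D_def
      by (rule key) (use degpos degle s t that in auto)
    moreover have "(\<Sum>x\<in>e. f x) = f s + f t" using est st by simp
    ultimately show ?thesis unfolding s_def[symmetric] t_def[symmetric] by simp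
  qed
  have "real_of_int (irr E) = (\<Sum>e\<in>E. real_of_int \<bar>int (degree E (SOME u. u \<in> e)) - int (degree E (SOME v. v \<in> e - {SOME u. u \<in> e}))\<bar>)"
    unfolding irr_def by simp
  also have "\<dots> \<le> (\<Sum>e\<in>E. (\<Sum>x\<in>e. f x) + c)"
    by (rule sum_mono) (rule edge)
  also have "\<dots> = (\<Sum>e\<in>E. \<Sum>x\<in>V. if x \<in> e then f x else 0) + c * real (card E)"
  proof -
    have "(\<Sum>x\<in>e. f x) = (\<Sum>x\<in>V. if x \<in> e then f x else 0)" if "e \<in> E" for e
    proof -
      have "(\<Sum>x\<in>V. if x \<in> e then f x else 0) = (\<Sum>x\<in>V \<inter> e. f x)"
        using fV by (simp add: sum.inter_restrict)
      also have "V \<inter> e = e" using eV that by auto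
      finally show ?thesis by simp
    qed
    then show ?thesis by (simp add: sum.distrib)
  qed
  also have "(\<Sum>e\<in>E. \<Sum>x\<in>V. if x \<in> e then f x else 0) = (\<Sum>x\<in>V. \<Sum>e\<in>E. if x \<in> e then f x else 0)"
    by (rule sum.swap)
  also have "\<dots> = (\<Sum>x\<in>V. real (degree E x) * f x)"
  proof (rule sum.cong[OF refl])
    fix x assume "x \<in> V"
    have "(\<Sum>e\<in>E. if x \<in> e then f x else 0) = (\<Sum>e\<in>{e\<in>E. x \<in> e}. f x)"
      using fE by (simp add: sum.inter_filter[symmetric])
    then show "(\<Sum>e\<in>E. if x \<in> e then f x else 0) = real (degree E x) * f x"
      unfolding degree_def by simp
  qed
  also have "\<dots> \<le> (\<Sum>x\<in>V. D)"
  proof (rule sum_mono)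
    fix x assume "x \<in> V"
    have "D \<ge> 0" unfolding D_def by simp
    then show "real (degree E x) * f x \<le> D" unfolding f_def
      by (cases "degree E x = 0") auto
  qed
  also have "\<dots> = D * real (card V)" by simp
  finally show ?thesis unfolding D_def c_def by simp
qed

end
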